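(* Consider a ReLU network with $L$ hidden layers, an input point $x \in \mathbb{R}^n$, and a convex distance function $\delta$ to $x$. Let $\mathcal{G}$ be the hierarchical search graph and let $A^x := (A^x_1)$ be the $1$-layer partial activation pattern of $x$. Then for every $l \in [L]$ and every $l$-layer partial activation pattern $A$ with $R_A \neq \emptyset$, there is a path in $\mathcal{G}$ from $A^x$ to $A$ along which the values $\operatorname{dist}(R_B)$ of the visited patterns $B$ are monotonically nondecreasing.
   Context: The ReLU network with input dimension $n$ and $n_i$ neurons in hidden layer $i$ is given by $x^0 := x$, $z^{i+1} := W^i x^i + b^i$ for $i \in \{0,\dots,L-1\}$, $x^i := \max(0, z^i)$ (entrywise) for $i \in [L]$, and output $f(x) := W^L x^L + b^L$, where $W^i, b^i$ are real weight matrices and bias vectors of compatible dimensions; $z^i_j(v)$ denotes the $j$-th preactivation of layer $i$ at input $v$. For $l \in [L]$, an $l$-layer partial activation pattern is a tuple $A = (A_1,\dots,A_l)$ of functions $A_i : [n_i] \to \{-1,+1\}$; its region is $R_A := \{ v \in \mathbb{R}^n : A_i(j)\, z^i_j(v) \ge 0 \text{ for all } i \in [l], j \in [n_i]\}$ (a closed polyhedron). The activation pattern of an input $v$ has $A^v_i(j) = +1$ if $z^i_j(v) \ge 0$ and $-1$ otherwise; the $1$-layer pattern of $x$ is $(A^x_1)$. For $l \ge 2$, $\operatorname{parent}(A_1,\dots,A_l) := (A_1,\dots,A_{l-1})$, and $A$ is a child of $\operatorname{parent}(A)$. Two $l$-layer patterns are siblings if they have the same parent (for $l=1$, all $1$-layer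 patterns are siblings), and neighboring siblings if they differ on exactly one neuron of layer $l$. A convex distance function to $x$ is a convex, continuous function $\delta : \mathbb{R}^n \to [0,\infty)$ with bounded sublevel sets and $\delta(x)=0$ (e.g. $\delta(v) = \|v - x\|_p$); for a nonempty closed set $S$, $\operatorname{dist}(S) := \min_{v \in S}\delta(v)$. The hierarchical search graph $\mathcal{G}$ has as vertices all $l$-layer partial activation patterns with nonempty region, for $l \in [L]$; it has an edge between two $l$-layer patterns whenever they are neighboring siblings, and an edge between an $(l-1)$-layer pattern $B$ and a child $A$ of $B$ (with $R_A \neq \emptyset$) whenever $R_A$ has the smallest value of $\operatorname{dist}$ among all children of $B$ with nonempty region (equivalently $\operatorname{dist}(R_A) = \operatorname{dist}(R_B)$). *)

theory Defs
  imports "HOL-Analysis.Analysis"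
begin

text \<open>A ReLU network with input space real^'n and L hidden layers.
  width i = n_i (number of neurons of hidden layer i, for i in 1..L);
  neurons are indexed 0-based, j < width i.
  W0 j :: real^'n is row j of the first weight matrix W^0, b0 j the bias b^0_j;
  W i j k is entry (j,k) of W^i (i >= 1), b i j the bias b^i_j (i >= 1).
  The output layer W^L, b^L plays no role in the statement.\<close>

fun preact :: "(nat \<Rightarrow> nat) \<Rightarrow> (nat \<Rightarrow> real^'n) \<Rightarrow> (nat \<Rightarrow> real)
      \<Rightarrow> (nat \<Rightarrow> nat \<Rightarrow> nat \<Rightarrow> real) \<Rightarrow> (nat \<Rightarrow> nat \<Rightarrow> real)
      \<Rightarrow> nat \<Rightarrow> nat \<Rightarrow> real^'n \<Rightarrow> real" where
  "preact width W0 b0 W b 0 j v = 0"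
| "preact width W0 b0 W b (Suc 0) j v = W0 j \<bullet> v + b0 j"
| "preact width W0 b0 W b (Suc (Suc i)) j v =
     (\<Sum>k<width (Suc i). W (Suc i) j k * max 0 (preact width W0 b0 W b (Suc i) k v))
     + b (Suc i) j"

text \<open>An l-layer partial activation pattern (A_1,...,A_l) is a list of length l;
  entry number i (0-based) is A_{i+1} : [n_{i+1}] -> {-1,+1}, extended by 0
  outside its domain so that equality of patterns is equality of lists.\<close>

definition is_pattern :: "nat \<Rightarrow> (nat \<Rightarrow> nat) \<Rightarrow> (nat \<Rightarrow> int) list \<Rightarrow> bool" where
  "is_pattern L width A \<longleftrightarrow> 1 \<le> length A \<and> length A \<le> L \<and>
     (\<forall>i<length A. \<forall>j. (j < width (Suc i) \<longrightarrow> (A ! i) j \<in> {-1, 1}) \<and>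
                         (\<not> j < width (Suc i) \<longrightarrow> (A ! i) j = 0))"

definition region :: "(nat \<Rightarrow> nat) \<Rightarrow> (nat \<Rightarrow> real^'n) \<Rightarrow> (nat \<Rightarrow> real)
      \<Rightarrow> (nat \<Rightarrow> nat \<Rightarrow> nat \<Rightarrow> real) \<Rightarrow> (nat \<Rightarrow> nat \<Rightarrow> real)
      \<Rightarrow> (nat \<Rightarrow> int) list \<Rightarrow> (real^'n) set" where
  "region width W0 b0 W b A = {v. \<forall>i<length A. \<forall>j<width (Suc i).
       real_of_int ((A ! i) j) * preact width W0 b0 W b (Suc i) j v \<ge> 0}"

definition pattern1_of :: "(nat \<Rightarrow> nat) \<Rightarrow> (nat \<Rightarrow> real^'n) \<Rightarrow> (nat \<Rightarrow> real)
      \<Rightarrow> (nat \<Rightarrow> nat \<Rightarrow> nat \<Rightarrow> real) \<Rightarrow> (nat \<Rightarrow> nat \<Rightarrow> real)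
      \<Rightarrow> real^'n \<Rightarrow> (nat \<Rightarrow> int) list" where
  "pattern1_of width W0 b0 W b x =
     [\<lambda>j. if j < width 1 then (if preact width W0 b0 W b 1 j x \<ge> 0 then 1 else -1) else 0]"

definition convex_distance_function :: "(real^'n \<Rightarrow> real) \<Rightarrow> real^'n \<Rightarrow> bool" where
  "convex_distance_function \<delta> x \<longleftrightarrow> convex_on UNIV \<delta> \<and> continuous_on UNIV \<delta> \<and>
     (\<forall>v. 0 \<le> \<delta> v) \<and> (\<forall>c. bounded {v. \<delta> v \<le> c}) \<and> \<delta> x = 0"

text \<open>dist(S) = min over S of delta; for nonempty closed S the minimum is attained,
  so it equals the infimum used here.\<close>
definition dist_set :: "(real^'n \<Rightarrow> real) \<Rightarrow> (real^'n) set \<Rightarrow> real" where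
  "dist_set \<delta> S = Inf (\<delta> ` S)"

text \<open>Parent of a pattern (for length >= 2) is dropping the last layer.
  Siblings: same length and same parent (for length 1 both parents are []).\<close>
definition siblings :: "(nat \<Rightarrow> int) list \<Rightarrow> (nat \<Rightarrow> int) list \<Rightarrow> bool" where
  "siblings A B \<longleftrightarrow> length A = length B \<and> butlast A = butlast B"

definition neighboring_siblings :: "(nat \<Rightarrow> nat) \<Rightarrow> (nat \<Rightarrow> int) list \<Rightarrow> (nat \<Rightarrow> int) list \<Rightarrow> bool" where
  "neighboring_siblings width A B \<longleftrightarrow> siblings A B \<and>
     card {j. j < width (length A) \<and> (last A) j \<noteq> (last B) j} = 1"

definition hvertex :: "nat \<Rightarrow> (nat \<Rightarrow> nat) \<Rightarrow> (nat \<Rightarrow> real^'n) \<Rightarrow> (nat \<Rightarrow> real)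
      \<Rightarrow> (nat \<Rightarrow> nat \<Rightarrow> nat \<Rightarrow> real) \<Rightarrow> (nat \<Rightarrow> nat \<Rightarrow> real)
      \<Rightarrow> (nat \<Rightarrow> int) list \<Rightarrow> bool" where
  "hvertex L width W0 b0 W b A \<longleftrightarrow> is_pattern L width A \<and> region width W0 b0 W b A \<noteq> {}"

definition tree_edge :: "nat \<Rightarrow> (nat \<Rightarrow> nat) \<Rightarrow> (nat \<Rightarrow> real^'n) \<Rightarrow> (nat \<Rightarrow> real)
      \<Rightarrow> (nat \<Rightarrow> nat \<Rightarrow> nat \<Rightarrow> real) \<Rightarrow> (nat \<Rightarrow> nat \<Rightarrow> real) \<Rightarrow> (real^'n \<Rightarrow> real)
      \<Rightarrow> (nat \<Rightarrow> int) list \<Rightarrow> (nat \<Rightarrow> int) list \<Rightarrow> bool" where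
  "tree_edge L width W0 b0 W b \<delta> B A \<longleftrightarrow>
     hvertex L width W0 b0 W b B \<and> hvertex L width W0 b0 W b A \<and>
     2 \<le> length A \<and> butlast A = B \<and>
     (\<forall>C. hvertex L width W0 b0 W b C \<and> 2 \<le> length C \<and> butlast C = B \<longrightarrow>
        dist_set \<delta> (region width W0 b0 W b A) \<le> dist_set \<delta> (region width W0 b0 W b C))"

definition hedge :: "nat \<Rightarrow> (nat \<Rightarrow> nat) \<Rightarrow> (nat \<Rightarrow> real^'n) \<Rightarrow> (nat \<Rightarrow> real)
      \<Rightarrow> (nat \<Rightarrow> nat \<Rightarrow> nat \<Rightarrow> real) \<Rightarrow> (nat \<Rightarrow> nat \<Rightarrow> real) \<Rightarrow> (real^'n \<Rightarrow> real)
      \<Rightarrow> (nat \<Rightarrow> int) list \<Rightarrow> (nat \<Rightarrow> int) list \<Rightarrow> bool" where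
  "hedge L width W0 b0 W b \<delta> A B \<longleftrightarrow>
     (hvertex L width W0 b0 W b A \<and> hvertex L width W0 b0 W b B \<and> neighboring_siblings width A B)
     \<or> tree_edge L width W0 b0 W b \<delta> A B \<or> tree_edge L width W0 b0 W b \<delta> B A"

definition hpath :: "nat \<Rightarrow> (nat \<Rightarrow> nat) \<Rightarrow> (nat \<Rightarrow> real^'n) \<Rightarrow> (nat \<Rightarrow> real)
      \<Rightarrow> (nat \<Rightarrow> nat \<Rightarrow> nat \<Rightarrow> real) \<Rightarrow> (nat \<Rightarrow> nat \<Rightarrow> real) \<Rightarrow> (real^'n \<Rightarrow> real)
      \<Rightarrow> (nat \<Rightarrow> int) list list \<Rightarrow> bool" where
  "hpath L width W0 b0 W b \<delta> p \<longleftrightarrow> p \<noteq> [] \<and>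
     (\<forall>B\<in>set p. hvertex L width W0 b0 W b B) \<and>
     (\<forall>i. Suc i < length p \<longrightarrow> hedge L width W0 b0 W b \<delta> (p ! i) (p ! Suc i))"

end

theory Submission imports Defs begin

lemma min_exists:
  fixes \<delta> :: "'a::heine_borel \<Rightarrow> real"
  assumes "closed S" "S \<noteq> {}" "continuous_on UNIV \<delta>" "\<forall>c. bounded {v. \<delta> v \<le> c}"
  shows "\<exists>q\<in>S. \<forall>v\<in>S. \<delta> q \<le> \<delta> v"
proof -
  obtain s0 where s0: "s0 \<in> S" using assms(2) by auto
  let ?K = "S \<inter> {v. \<delta> v \<le> \<delta> s0}"
  have "closed {v. \<delta> v \<le> \<delta> s0}"
    using assms(3) by (intro closed_Collect_le) (auto intro: continuous_on_const)
  hence cK: "closed ?K" using assms(1) by (intro closed_Int)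
  have bK: "bounded ?K" by (rule bounded_subset[OF assms(4)[rule_format, of "\<delta> s0"]]) auto
  have c1: "compact ?K" using cK bK by (simp add: compact_eq_bounded_closed)
  have c2: "?K \<noteq> {}" using s0 by auto
  have c3: "continuous_on ?K \<delta>" by (rule continuous_on_subset[OF assms(3)]) simp
  obtain q where q: "q \<in> ?K" "\<forall>y\<in>?K. \<delta> q \<le> \<delta> y"
    using continuous_attains_inf[OF c1 c2 c3] by auto
  show ?thesis
  proof (intro bexI[of _ q] ballI)
    fix v assume "v \<in> S"
    thus "\<delta> q \<le> \<delta> v" using q by (cases "\<delta> v \<le> \<delta> s0") auto
  qed (use q in auto)
qed

lemma dist_set_eq:
  assumes "q \<in> S" "\<forall>v\<in>S. \<delta> q \<le> \<delta> v"
  shows "dist_set \<delta> S = \<delta> q"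
  unfolding dist_set_def using assms by (intro cInf_eq_minimum) auto

definition sreg :: "'v set \<Rightarrow> (nat \<Rightarrow> 'v \<Rightarrow> real) \<Rightarrow> nat \<Rightarrow> (nat \<Rightarrow> int) \<Rightarrow> 'v set" where
  "sreg S z w a = S \<inter> {v. \<forall>j<w. real_of_int (a j) * z j v \<ge> 0}"

definition valid :: "nat \<Rightarrow> (nat \<Rightarrow> int) \<Rightarrow> bool" where
  "valid w c \<longleftrightarrow> (\<forall>j. (j < w \<longrightarrow> c j \<in> {-1, 1}) \<and> (\<not> j < w \<longrightarrow> c j = 0))"

definition sgnpat :: "(nat \<Rightarrow> 'v \<Rightarrow> real) \<Rightarrow> nat \<Rightarrow> 'v \<Rightarrow> nat \<Rightarrow> int" where
  "sgnpat z w q = (\<lambda>j. if j < w then (if z j q \<ge> 0 then 1 else -1) else 0)"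

lemma geom_step:
  fixes S :: "'v::real_vector set" and \<delta> :: "'v \<Rightarrow> real"
  assumes cS: "convex S" and qS: "q \<in> S" and qmin: "\<forall>v\<in>S. \<delta> q \<le> \<delta> v"
    and cd: "convex_on UNIV \<delta>"
    and aff: "\<And>j u v t. j < w \<Longrightarrow> u \<in> S \<Longrightarrow> v \<in> S \<Longrightarrow> 0 \<le> t \<Longrightarrow> t \<le> 1 \<Longrightarrow>
                z j ((1 - t) *\<^sub>R u + t *\<^sub>R v) = (1 - t) * z j u + t * z j v"
    and va: "valid w a" and y: "y \<in> sreg S z w a"
    and D: "{j. j < w \<and> a j \<noteq> sgnpat z w q j} \<noteq> {}"
  shows "\<exists>j0. j0 < w \<and> a j0 \<noteq> sgnpat z w q j0 \<and>
            (\<exists>u \<in> sreg S z w (a(j0 := sgnpat z w q j0)). \<delta> u \<le> \<delta> y)"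
proof -
  define Dj where "Dj = {j. j < w \<and> a j \<noteq> sgnpat z w q j}"
  define g0 where "g0 j = real_of_int (a j) * z j q" for j
  define g1 where "g1 j = real_of_int (a j) * z j y" for j
  define r where "r j = (if g0 j = g1 j then 0 else g0 j / (g0 j - g1 j))" for j
  have yS: "y \<in> S" and g1pos: "\<And>j. j < w \<Longrightarrow> g1 j \<ge> 0"
    using y unfolding sreg_def g1_def by auto
  have g0neg: "g0 j \<le> 0" if "j \<in> Dj" for j
  proof -
    have "j < w" "a j \<noteq> sgnpat z w q j" using that Dj_def by auto
    moreover have "a j \<in> {-1,1}" using va \<open>j < w\<close> unfolding valid_def by auto
    ultimately show ?thesis unfolding g0_def sgnpat_def by (auto split: if_splits)
  qed
  have r01: "0 \<le> r j \<and> r j \<le> 1" if "j \<in> Dj" for j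
  proof -
    have "g0 j \<le> 0" "g1 j \<ge> 0" using g0neg that g1pos Dj_def by auto
    thus ?thesis unfolding r_def by (auto simp: divide_simps)
  qed
  have rroot: "g0 j + r j * (g1 j - g0 j) = 0" if "j \<in> Dj" for j
  proof -
    have "g0 j \<le> 0" "g1 j \<ge> 0" using g0neg that g1pos Dj_def by auto
    thus ?thesis unfolding r_def by (auto simp: divide_simps algebra_simps)
  qed
  have fin: "finite Dj" unfolding Dj_def by auto
  have ne: "Dj \<noteq> {}" using D Dj_def by auto
  define t where "t = Max (r ` Dj)"
  obtain j0 where j0: "j0 \<in> Dj" "r j0 = t"
  proof -
    have "t \<in> r ` Dj" unfolding t_def using fin ne by (intro Max_in) auto
    thus ?thesis using that by auto
  qed
  have rle: "r j \<le> t" if "j \<in> Dj" for j using fin that t_def by auto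
  have t01: "0 \<le> t" "t \<le> 1" using r01 j0 by auto
  define u where "u = (1 - t) *\<^sub>R q + t *\<^sub>R y"
  have uS: "u \<in> S" unfolding u_def using cS qS yS t01 by (simp add: convexD_alt)
  have gu: "real_of_int (a j) * z j u = g0 j + t * (g1 j - g0 j)" if "j < w" for j
  proof -
    have e: "z j u = (1 - t) * z j q + t * z j y" using aff[OF that qS yS t01] unfolding u_def .
    show ?thesis unfolding g0_def g1_def e by (simp add: algebra_simps)
  qed
  have apos: "real_of_int (a j) * z j u \<ge> 0" if "j < w" for j
  proof (cases "j \<in> Dj")
    case True
    have "g1 j - g0 j \<ge> 0" using g0neg[OF True] g1pos[OF that] by auto
    hence "g0 j + r j * (g1 j - g0 j) \<le> g0 j + t * (g1 j - g0 j)"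
      using rle[OF True] by (simp add: mult_right_mono)
    thus ?thesis using rroot[OF True] gu[OF that] by simp
  next
    case False
    hence "a j = sgnpat z w q j" using that Dj_def by auto
    hence "g0 j \<ge> 0" unfolding g0_def sgnpat_def using that by auto
    moreover have "g1 j \<ge> 0" using g1pos that by auto
    ultimately have "0 \<le> (1 - t) * g0 j + t * g1 j" using t01 by simp
    thus ?thesis using gu[OF that] by (simp add: algebra_simps)
  qed
  have j0w: "j0 < w" and aj0: "a j0 \<in> {-1,1}" using j0 Dj_def va unfolding valid_def by auto
  have "real_of_int (a j0) * z j0 u = 0" using gu[OF j0w] rroot[OF j0(1)] j0(2) by simp
  hence zj0: "z j0 u = 0" using aj0 by auto
  have uin: "u \<in> sreg S z w (a(j0 := sgnpat z w q j0))"
    unfolding sreg_def using uS apos zj0 by auto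
  have duy: "\<delta> u \<le> \<delta> y"
  proof -
    have "\<delta> u \<le> (1 - t) * \<delta> q + t * \<delta> y"
      unfolding u_def using convex_onD[OF cd] t01 by auto
    also have "\<dots> \<le> (1 - t) * \<delta> y + t * \<delta> y"
      using qmin yS t01 by (simp add: mult_left_mono)
    finally show ?thesis by (simp add: algebra_simps)
  qed
  have ne0: "a j0 \<noteq> sgnpat z w q j0" using j0(1) unfolding Dj_def by simp
  have ex: "\<exists>u \<in> sreg S z w (a(j0 := sgnpat z w q j0)). \<delta> u \<le> \<delta> y"
    using duy uin by blast
  show ?thesis
  proof (rule exI[of _ j0], intro conjI)
    show "j0 < w" by (fact j0w)
    show "a j0 \<noteq> sgnpat z w q j0" by (fact ne0)
    show "\<exists>u \<in> sreg S z w (a(j0 := sgnpat z w q j0)). \<delta> u \<le> \<delta> y" by (fact ex)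
  qed
qed


lemma sib_path:
  fixes S :: "(real^'n) set" and \<delta> :: "real^'n \<Rightarrow> real"
  assumes cS: "convex S" and qS: "q \<in> S" and qmin: "\<forall>v\<in>S. \<delta> q \<le> \<delta> v"
    and cd: "convex_on UNIV \<delta>"
    and aff: "\<And>j u v t. j < w \<Longrightarrow> u \<in> S \<Longrightarrow> v \<in> S \<Longrightarrow> 0 \<le> t \<Longrightarrow> t \<le> 1 \<Longrightarrow>
                z j ((1 - t) *\<^sub>R u + t *\<^sub>R v) = (1 - t) * z j u + t * z j v"
    and hmin: "\<And>c. sreg S z w c \<noteq> {} \<Longrightarrow> \<exists>y\<in>sreg S z w c. \<forall>v\<in>sreg S z w c. \<delta> y \<le> \<delta> v"
  shows "card {j. j < w \<and> a j \<noteq> sgnpat z w q j} = n \<Longrightarrow> valid w a \<Longrightarrow> sreg S z w a \<noteq> {} \<Longrightarrow>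
    \<exists>ps. ps \<noteq> [] \<and> hd ps = sgnpat z w q \<and> last ps = a \<and>
      (\<forall>c\<in>set ps. valid w c \<and> sreg S z w c \<noteq> {}) \<and>
      (\<forall>i. Suc i < length ps \<longrightarrow> card {j. j < w \<and> (ps!i) j \<noteq> (ps!Suc i) j} = 1 \<and>
          dist_set \<delta> (sreg S z w (ps!i)) \<le> dist_set \<delta> (sreg S z w (ps!Suc i)))"
proof (induction n arbitrary: a)
  case 0
  have "{j. j < w \<and> a j \<noteq> sgnpat z w q j} = {}" using 0(1) by simp
  hence "a = sgnpat z w q" using 0(2) unfolding valid_def sgnpat_def by (intro ext) auto
  thus ?case using 0 by (intro exI[of _ "[a]"]) auto
next
  case (Suc n)
  let ?D = "{j. j < w \<and> a j \<noteq> sgnpat z w q j}"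
  have Dne: "?D \<noteq> {}"
  proof
    assume "?D = {}"
    hence "card ?D = 0" by (simp only: card.empty)
    thus False using Suc(2) by simp
  qed
  obtain y where y: "y \<in> sreg S z w a" "\<forall>v\<in>sreg S z w a. \<delta> y \<le> \<delta> v"
    using hmin[OF Suc(4)] by blast
  obtain j0 u where j0: "j0 < w" "a j0 \<noteq> sgnpat z w q j0"
    and u: "u \<in> sreg S z w (a(j0 := sgnpat z w q j0))" "\<delta> u \<le> \<delta> y"
    using geom_step[OF cS qS qmin cd aff Suc(3) y(1) Dne] by blast
  define b where "b = a(j0 := sgnpat z w q j0)"
  have vb: "valid w b" using Suc(3) j0(1) unfolding valid_def b_def sgnpat_def by auto
  have "{j. j < w \<and> b j \<noteq> sgnpat z w q j} = ?D - {j0}" unfolding b_def by auto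
  hence cb: "card {j. j < w \<and> b j \<noteq> sgnpat z w q j} = n"
    using Suc(2) j0 by (simp add: card_Diff_singleton)
  have neb: "sreg S z w b \<noteq> {}" using u(1) b_def by auto
  obtain ps where ps: "ps \<noteq> []" "hd ps = sgnpat z w q" "last ps = b"
      "\<forall>c\<in>set ps. valid w c \<and> sreg S z w c \<noteq> {}"
      "\<forall>i. Suc i < length ps \<longrightarrow> card {j. j < w \<and> (ps!i) j \<noteq> (ps!Suc i) j} = 1 \<and>
          dist_set \<delta> (sreg S z w (ps!i)) \<le> dist_set \<delta> (sreg S z w (ps!Suc i))"
    using Suc.IH[OF cb vb neb] by blast
  have dab: "dist_set \<delta> (sreg S z w b) \<le> dist_set \<delta> (sreg S z w a)"
  proof -
    obtain yb where yb: "yb \<in> sreg S z w b" "\<forall>v\<in>sreg S z w b. \<delta> yb \<le> \<delta> v"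
      using hmin[OF neb] by blast
    have "dist_set \<delta> (sreg S z w b) = \<delta> yb" using dist_set_eq[OF yb] .
    also have "\<dots> \<le> \<delta> u" using yb(2) u(1) b_def by auto
    also have "\<dots> \<le> \<delta> y" by fact
    also have "\<dots> = dist_set \<delta> (sreg S z w a)" using dist_set_eq[OF y] by simp
    finally show ?thesis .
  qed
  have cba: "card {j. j < w \<and> b j \<noteq> a j} = 1"
  proof -
    have "{j. j < w \<and> b j \<noteq> a j} = {j0}" using j0 unfolding b_def by auto
    thus ?thesis by simp
  qed
  show ?case
  proof (rule exI[of _ "ps @ [a]"], intro conjI)
    show "ps @ [a] \<noteq> []" by simp
    show "last (ps @ [a]) = a" by simp
    show "hd (ps @ [a]) = sgnpat z w q" using ps by simp
    show "\<forall>c\<in>set (ps @ [a]). valid w c \<and> sreg S z w c \<noteq> {}" using ps Suc by auto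
    show "\<forall>i. Suc i < length (ps @ [a]) \<longrightarrow> card {j. j < w \<and> ((ps @ [a]) ! i) j \<noteq> ((ps @ [a]) ! Suc i) j} = 1 \<and>
       dist_set \<delta> (sreg S z w ((ps @ [a]) ! i)) \<le> dist_set \<delta> (sreg S z w ((ps @ [a]) ! Suc i))"
    proof (intro allI impI)
    fix i assume i: "Suc i < length (ps @ [a])"
    show "card {j. j < w \<and> ((ps @ [a]) ! i) j \<noteq> ((ps @ [a]) ! Suc i) j} = 1 \<and>
       dist_set \<delta> (sreg S z w ((ps @ [a]) ! i)) \<le> dist_set \<delta> (sreg S z w ((ps @ [a]) ! Suc i))"
    proof (cases "Suc i < length ps")
      case True
      thus ?thesis using ps(5) by (simp add: nth_append)
    next
      case False
      hence ii: "Suc i = length ps" using i by simp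
      hence "i = length ps - 1" by simp
      hence "(ps @ [a]) ! i = b" using ps(1,3) ii by (simp add: nth_append last_conv_nth)
      moreover have "(ps @ [a]) ! Suc i = a" using ii by (simp add: nth_append)
      ultimately show ?thesis using cba dab by simp
    qed
    qed
  qed
qed


definition chain :: "('a \<Rightarrow> 'a \<Rightarrow> bool) \<Rightarrow> 'a list \<Rightarrow> bool" where
  "chain R xs \<longleftrightarrow> (\<forall>i. Suc i < length xs \<longrightarrow> R (xs!i) (xs!Suc i))"

lemma chain_append:
  assumes "chain R xs" "chain R ys" "xs \<noteq> []" "ys \<noteq> []" "R (last xs) (hd ys)"
  shows "chain R (xs @ ys)"
  unfolding chain_def
proof (intro allI impI)
  fix i assume i: "Suc i < length (xs @ ys)"
  consider (a) "Suc i < length xs" | (b) "Suc i = length xs" | (c) "length xs \<le> i" by linarith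
  thus "R ((xs @ ys) ! i) ((xs @ ys) ! Suc i)"
  proof cases
    case a thus ?thesis using assms(1) unfolding chain_def by (simp add: nth_append)
  next
    case b
    hence ii: "i = length xs - 1" by simp
    have "(xs @ ys) ! i = last xs" using assms(3) b by (simp add: nth_append last_conv_nth ii)
    moreover have "(xs @ ys) ! Suc i = hd ys" using b assms(4) by (simp add: nth_append hd_conv_nth)
    ultimately show ?thesis using assms(5) by simp
  next
    case c
    hence "(xs @ ys) ! i = ys ! (i - length xs)" "(xs @ ys) ! Suc i = ys ! Suc (i - length xs)"
      by (simp_all add: nth_append Suc_diff_le)
    moreover have "Suc (i - length xs) < length ys" using i c by simp
    ultimately show ?thesis using assms(2) unfolding chain_def by simp
  qed
qed

lemma chain_map:
  assumes "chain R' ps" "\<And>a c. a \<in> set ps \<Longrightarrow> c \<in> set ps \<Longrightarrow> R' a c \<Longrightarrow> R (f a) (f c)"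
  shows "chain R (map f ps)"
  using assms unfolding chain_def by (auto simp: nth_mem)

lemma maxsel: "c \<in> {-1, 1} \<Longrightarrow> 0 \<le> real_of_int c * p \<Longrightarrow> max 0 p = (if c = 1 then 1 else 0) * p"
  by (auto simp: max_def) 

context
  fixes width :: "nat \<Rightarrow> nat" and W0 :: "nat \<Rightarrow> real^'n" and b0 :: "nat \<Rightarrow> real"
    and W :: "nat \<Rightarrow> nat \<Rightarrow> nat \<Rightarrow> real" and b :: "nat \<Rightarrow> nat \<Rightarrow> real"
begin

lemma cont_preact: "continuous_on UNIV (preact width W0 b0 W b i j)"
proof (induction i arbitrary: j)
  case 0
  have "preact width W0 b0 W b 0 j = (\<lambda>v. 0)" by (rule ext) simp
  thus ?case by (simp add: continuous_on_const)
next
  case (Suc i)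
  show ?case
  proof (cases i)
    case 0
    have "preact width W0 b0 W b (Suc i) j = (\<lambda>v. W0 j \<bullet> v + b0 j)" using 0 by (intro ext) simp
    thus ?thesis by (simp add: continuous_intros)
  next
    case (Suc m)
    have "preact width W0 b0 W b (Suc i) j = (\<lambda>v. (\<Sum>k<width (Suc m). W (Suc m) j k *
        max 0 (preact width W0 b0 W b (Suc m) k v)) + b (Suc m) j)" using Suc by (intro ext) simp
    moreover have "\<And>k. continuous_on UNIV (preact width W0 b0 W b (Suc m) k)"
      using Suc.IH Suc by simp
    ultimately show ?thesis by (auto intro!: continuous_intros)
  qed
qed

lemma closed_region: "closed (region width W0 b0 W b A)"
proof -
  have "region width W0 b0 W b A = (\<Inter>i\<in>{..<length A}. \<Inter>j\<in>{..<width (Suc i)}.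
      {v. 0 \<le> real_of_int ((A ! i) j) * preact width W0 b0 W b (Suc i) j v})"
    unfolding region_def by auto
  moreover have "closed {v. 0 \<le> real_of_int ((A ! i) j) * preact width W0 b0 W b (Suc i) j v}" for i j
    by (intro closed_Collect_le continuous_on_const continuous_on_mult cont_preact)
  ultimately show ?thesis by (simp add: closed_INT)
qed

lemma region_Nil: "region width W0 b0 W b [] = UNIV" by (simp add: region_def)

lemma region_snoc: "region width W0 b0 W b (P @ [c]) =
   sreg (region width W0 b0 W b P) (preact width W0 b0 W b (Suc (length P))) (width (Suc (length P))) c"
  unfolding region_def sreg_def by (auto simp: nth_append less_Suc_eq)

lemma region_snoc_sub: "region width W0 b0 W b (P @ [c]) \<subseteq> region width W0 b0 W b P"
  unfolding region_snoc sreg_def by auto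

lemma aff_preact:
  assumes vP: "\<forall>i<length P. \<forall>j<width (Suc i). (P!i) j \<in> {-1,1}"
    and u: "u \<in> region width W0 b0 W b P" and v: "v \<in> region width W0 b0 W b P"
    and t: "0 \<le> t" "t \<le> 1"
  shows "1 \<le> i \<Longrightarrow> i \<le> Suc (length P) \<Longrightarrow>
    preact width W0 b0 W b i j ((1 - t) *\<^sub>R u + t *\<^sub>R v)
      = (1 - t) * preact width W0 b0 W b i j u + t * preact width W0 b0 W b i j v"
proof (induction i arbitrary: j)
  case 0 thus ?case by simp
next
  case (Suc i)
  show ?case
  proof (cases i)
    case 0
    thus ?thesis by (simp add: inner_add_right algebra_simps)
  next
    case (Suc m)
    define pre where "pre = preact width W0 b0 W b (Suc m)"
    define mid where "mid = (1 - t) *\<^sub>R u + t *\<^sub>R v"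
    have mlt: "m < length P" using Suc.prems Suc by simp
    have IH: "pre k mid = (1 - t) * pre k u + t * pre k v" for k
      using Suc.IH[of k] Suc.prems Suc unfolding pre_def mid_def by simp
    define s where "s k = (if (P ! m) k = 1 then 1 else 0 :: real)" for k
    have sel: "max 0 (pre k y) = s k * pre k y"
      if k: "k < width (Suc m)" and y: "y \<in> {u, v, mid}" for k y
    proof -
      have c: "(P ! m) k \<in> {-1, 1}" using vP mlt k by auto
      have pu: "0 \<le> real_of_int ((P ! m) k) * pre k u"
        using u mlt k unfolding region_def pre_def by auto
      have pv: "0 \<le> real_of_int ((P ! m) k) * pre k v"
        using v mlt k unfolding region_def pre_def by auto
      have "0 \<le> real_of_int ((P ! m) k) * pre k mid"
      proof -
        have "real_of_int ((P ! m) k) * pre k mid =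
            (1 - t) * (real_of_int ((P ! m) k) * pre k u) + t * (real_of_int ((P ! m) k) * pre k v)"
          unfolding IH by (simp add: algebra_simps)
        also have "\<dots> \<ge> 0" using pu pv t by simp
        finally show ?thesis .
      qed
      thus ?thesis using maxsel[OF c] pu pv y unfolding s_def by auto
    qed
    define f where "f y = (\<Sum>k<width (Suc m). W (Suc m) j k * max 0 (pre k y))" for y
    have "f mid = (\<Sum>k<width (Suc m). (1 - t) * (W (Suc m) j k * max 0 (pre k u))
                    + t * (W (Suc m) j k * max 0 (pre k v)))"
      unfolding f_def
    proof (rule sum.cong)
      fix k assume "k \<in> {..<width (Suc m)}"
      hence k: "k < width (Suc m)" by simp
      show "W (Suc m) j k * max 0 (pre k mid) =
          (1 - t) * (W (Suc m) j k * max 0 (pre k u)) + t * (W (Suc m) j k * max 0 (pre k v))"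
      proof -
        have s1: "max 0 (pre k mid) = s k * pre k mid" using sel[OF k] by simp
        have s2: "max 0 (pre k u) = s k * pre k u" using sel[OF k] by simp
        have s3: "max 0 (pre k v) = s k * pre k v" using sel[OF k] by simp
        show ?thesis unfolding s1 s2 s3 unfolding IH by (simp add: algebra_simps)
      qed
    qed simp
    also have "\<dots> = (1 - t) * f u + t * f v"
      unfolding f_def by (simp add: sum.distrib sum_distrib_left)
    finally have fm: "f mid = (1 - t) * f u + t * f v" .
    have e: "preact width W0 b0 W b (Suc i) j y = f y + b (Suc m) j" for y
      unfolding f_def pre_def using Suc by simp
    show ?thesis unfolding e mid_def[symmetric] fm by (simp add: algebra_simps)
  qed
qed

lemma convex_region:
  assumes vP: "\<forall>i<length P. \<forall>j<width (Suc i). (P!i) j \<in> {-1,1}"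
  shows "convex (region width W0 b0 W b P)"
  unfolding convex_alt
proof (intro ballI allI impI)
  fix u v and t :: real
  assume u: "u \<in> region width W0 b0 W b P" and v: "v \<in> region width W0 b0 W b P"
    and t: "0 \<le> t \<and> t \<le> 1"
  show "(1 - t) *\<^sub>R u + t *\<^sub>R v \<in> region width W0 b0 W b P"
    unfolding region_def
  proof (intro CollectI allI impI)
    fix i j assume i: "i < length P" and j: "j < width (Suc i)"
    have pu: "0 \<le> real_of_int ((P ! i) j) * preact width W0 b0 W b (Suc i) j u"
      using u i j unfolding region_def by auto
    have pv: "0 \<le> real_of_int ((P ! i) j) * preact width W0 b0 W b (Suc i) j v"
      using v i j unfolding region_def by auto
    have "real_of_int ((P ! i) j) * preact width W0 b0 W b (Suc i) j ((1 - t) *\<^sub>R u + t *\<^sub>R v)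
      = (1 - t) * (real_of_int ((P ! i) j) * preact width W0 b0 W b (Suc i) j u)
        + t * (real_of_int ((P ! i) j) * preact width W0 b0 W b (Suc i) j v)"
    proof -
      have e: "preact width W0 b0 W b (Suc i) j ((1 - t) *\<^sub>R u + t *\<^sub>R v) =
        (1 - t) * preact width W0 b0 W b (Suc i) j u + t * preact width W0 b0 W b (Suc i) j v"
        using aff_preact[OF vP u v, of t "Suc i" j] t i by simp
      show ?thesis unfolding e by (simp add: algebra_simps)
    qed
    also have "\<dots> \<ge> 0" using pu pv t by simp
    finally show "0 \<le> real_of_int ((P ! i) j) * preact width W0 b0 W b (Suc i) j ((1 - t) *\<^sub>R u + t *\<^sub>R v)" .
  qed
qed

end


definition pvalid :: "(nat \<Rightarrow> nat) \<Rightarrow> (nat \<Rightarrow> int) list \<Rightarrow> bool" where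
  "pvalid width P \<longleftrightarrow> (\<forall>i<length P. valid (width (Suc i)) (P ! i))"

lemma is_pattern_alt: "is_pattern L width A \<longleftrightarrow> 1 \<le> length A \<and> length A \<le> L \<and> pvalid width A"
  unfolding is_pattern_def pvalid_def valid_def by blast

lemma pvalid_snoc: "pvalid width (P @ [c]) \<longleftrightarrow> pvalid width P \<and> valid (width (Suc (length P))) c"
  unfolding pvalid_def by (auto simp: nth_append less_Suc_eq)

lemma pvalid_entries: "pvalid width P \<Longrightarrow> \<forall>i<length P. \<forall>j<width (Suc i). (P!i) j \<in> {-1,1}"
  unfolding pvalid_def valid_def by blast

context
  fixes L :: nat and width :: "nat \<Rightarrow> nat"
    and W0 :: "nat \<Rightarrow> real^'n" and b0 :: "nat \<Rightarrow> real"
    and W :: "nat \<Rightarrow> nat \<Rightarrow> nat \<Rightarrow> real" and b :: "nat \<Rightarrow> nat \<Rightarrow> real"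
    and x :: "real^'n" and \<delta> :: "real^'n \<Rightarrow> real"
  assumes cdf: "convex_distance_function \<delta> x"
begin

lemma main_ind:
  "is_pattern L width A \<Longrightarrow> region width W0 b0 W b A \<noteq> {} \<Longrightarrow>
   \<exists>p. p \<noteq> [] \<and> (\<forall>B\<in>set p. hvertex L width W0 b0 W b B) \<and>
     hd p = pattern1_of width W0 b0 W b x \<and> last p = A \<and>
     chain (\<lambda>B C. hedge L width W0 b0 W b \<delta> B C \<and>
       dist_set \<delta> (region width W0 b0 W b B) \<le> dist_set \<delta> (region width W0 b0 W b C)) p"
proof (induction A rule: rev_induct)
  case Nil thus ?case by (simp add: is_pattern_def)
next
  case (snoc c P)
  let ?R = "region width W0 b0 W b"
  let ?l = "length P"
  let ?w = "width (Suc ?l)"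
  let ?z = "preact width W0 b0 W b (Suc ?l)"
  let ?S = "region width W0 b0 W b P"
  let ?Rel = "\<lambda>B C. hedge L width W0 b0 W b \<delta> B C \<and> dist_set \<delta> (?R B) \<le> dist_set \<delta> (?R C)"
  have cd: "convex_on UNIV \<delta>" and ct: "continuous_on UNIV \<delta>" and pos: "\<forall>v. 0 \<le> \<delta> v"
    and bd: "\<forall>c. bounded {v. \<delta> v \<le> c}" and dx: "\<delta> x = 0"
    using cdf unfolding convex_distance_function_def by auto
  have pat: "Suc ?l \<le> L" "pvalid width P" "valid ?w c"
    using snoc.prems(1) unfolding is_pattern_alt pvalid_snoc by auto
  have vP: "\<forall>i<length P. \<forall>j<width (Suc i). (P!i) j \<in> {-1,1}"
    using pvalid_entries[OF pat(2)] .
  have cS: "convex ?S" using convex_region[OF vP] .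
  have sregR: "sreg ?S ?z ?w c' = ?R (P @ [c'])" for c'
    using region_snoc[of width W0 b0 W b P c'] by simp
  have hmin: "\<exists>y\<in>sreg ?S ?z ?w c'. \<forall>v\<in>sreg ?S ?z ?w c'. \<delta> y \<le> \<delta> v"
    if "sreg ?S ?z ?w c' \<noteq> {}" for c'
    using min_exists[OF _ that ct bd] closed_region[of width W0 b0 W b "P @ [c']"] sregR[of c']
    by simp
  have aff: "?z j ((1 - t) *\<^sub>R u + t *\<^sub>R v) = (1 - t) * ?z j u + t * ?z j v"
    if "j < ?w" "u \<in> ?S" "v \<in> ?S" "0 \<le> t" "t \<le> 1" for j u v t
    using aff_preact[OF vP that(2,3,4,5), of "Suc ?l" j] by simp
  have ne: "sreg ?S ?z ?w c \<noteq> {}" using snoc.prems(2) sregR by simp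
  have hv: "hvertex L width W0 b0 W b (P @ [c'])"
    if "valid ?w c'" "sreg ?S ?z ?w c' \<noteq> {}" for c'
    unfolding hvertex_def is_pattern_alt pvalid_snoc using that pat sregR[of c'] by simp
  have nbr: "neighboring_siblings width (P @ [c1]) (P @ [c2])"
    if "card {j. j < ?w \<and> c1 j \<noteq> c2 j} = 1" for c1 c2
    unfolding neighboring_siblings_def siblings_def using that by simp
  have mapchain: "chain ?Rel (map (\<lambda>c'. P @ [c']) ps)"
    if "\<forall>c\<in>set ps. valid ?w c \<and> sreg ?S ?z ?w c \<noteq> {}"
       "\<forall>i. Suc i < length ps \<longrightarrow> card {j. j < ?w \<and> (ps!i) j \<noteq> (ps!Suc i) j} = 1 \<and>
          dist_set \<delta> (sreg ?S ?z ?w (ps!i)) \<le> dist_set \<delta> (sreg ?S ?z ?w (ps!Suc i))" for ps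
  proof (rule chain_map[of "\<lambda>c1 c2. card {j. j < ?w \<and> c1 j \<noteq> c2 j} = 1 \<and>
          dist_set \<delta> (sreg ?S ?z ?w c1) \<le> dist_set \<delta> (sreg ?S ?z ?w c2)"])
    show "chain (\<lambda>c1 c2. card {j. j < ?w \<and> c1 j \<noteq> c2 j} = 1 \<and>
          dist_set \<delta> (sreg ?S ?z ?w c1) \<le> dist_set \<delta> (sreg ?S ?z ?w c2)) ps"
      using that(2) unfolding chain_def by blast
  next
    fix c1 c2 assume c1: "c1 \<in> set ps" and c2: "c2 \<in> set ps"
      and r: "card {j. j < ?w \<and> c1 j \<noteq> c2 j} = 1 \<and>
          dist_set \<delta> (sreg ?S ?z ?w c1) \<le> dist_set \<delta> (sreg ?S ?z ?w c2)"
    have "hedge L width W0 b0 W b \<delta> (P @ [c1]) (P @ [c2])"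
      unfolding hedge_def using hv c1 c2 that(1) nbr r by blast
    thus "?Rel (P @ [c1]) (P @ [c2])" using r sregR by simp
  qed
  have mapv: "\<forall>B\<in>set (map (\<lambda>c'. P @ [c']) ps). hvertex L width W0 b0 W b B"
    if "\<forall>c\<in>set ps. valid ?w c \<and> sreg ?S ?z ?w c \<noteq> {}" for ps
    using that hv by auto
  show ?case
  proof (cases "P = []")
    case True
    have qS: "x \<in> ?S" using True by (simp add: region_Nil)
    have qmin: "\<forall>v\<in>?S. \<delta> x \<le> \<delta> v" using pos dx by simp
    obtain ps where ps: "ps \<noteq> []" "hd ps = sgnpat ?z ?w x" "last ps = c"
      "\<forall>c\<in>set ps. valid ?w c \<and> sreg ?S ?z ?w c \<noteq> {}"
      "\<forall>i. Suc i < length ps \<longrightarrow> card {j. j < ?w \<and> (ps!i) j \<noteq> (ps!Suc i) j} = 1 \<and>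
          dist_set \<delta> (sreg ?S ?z ?w (ps!i)) \<le> dist_set \<delta> (sreg ?S ?z ?w (ps!Suc i))"
      using sib_path[OF cS qS qmin cd aff hmin refl pat(3) ne] by blast
    show ?thesis
    proof (intro exI[of _ "map (\<lambda>c'. P @ [c']) ps"] conjI)
      show "map (\<lambda>c'. P @ [c']) ps \<noteq> []" using ps by simp
      show "\<forall>B\<in>set (map (\<lambda>c'. P @ [c']) ps). hvertex L width W0 b0 W b B" using mapv ps(4) .
      show "hd (map (\<lambda>c'. P @ [c']) ps) = pattern1_of width W0 b0 W b x"
      proof -
        have e1: "Suc (length P) = 1" using True by simp
        show ?thesis using ps(1,2) unfolding pattern1_of_def sgnpat_def e1
          by (simp add: hd_map True)
      qed
      show "last (map (\<lambda>c'. P @ [c']) ps) = P @ [c]" using ps(1,3) by (simp add: last_map)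
      show "chain ?Rel (map (\<lambda>c'. P @ [c']) ps)" using mapchain ps(4,5) by blast
    qed
  next
    case False
    have patP: "is_pattern L width P" using False pat unfolding is_pattern_alt
      by (simp add: Suc_le_eq)
    have neP: "?S \<noteq> {}" using snoc.prems(2) region_snoc_sub by blast
    obtain p0 where p0: "p0 \<noteq> []" "\<forall>B\<in>set p0. hvertex L width W0 b0 W b B"
      "hd p0 = pattern1_of width W0 b0 W b x" "last p0 = P" "chain ?Rel p0"
      using snoc.IH[OF patP neP] by blast
    obtain q where qS: "q \<in> ?S" and qmin: "\<forall>v\<in>?S. \<delta> q \<le> \<delta> v"
      using min_exists[OF closed_region neP ct bd] by blast
    obtain ps where ps: "ps \<noteq> []" "hd ps = sgnpat ?z ?w q" "last ps = c"
      "\<forall>c\<in>set ps. valid ?w c \<and> sreg ?S ?z ?w c \<noteq> {}"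
      "\<forall>i. Suc i < length ps \<longrightarrow> card {j. j < ?w \<and> (ps!i) j \<noteq> (ps!Suc i) j} = 1 \<and>
          dist_set \<delta> (sreg ?S ?z ?w (ps!i)) \<le> dist_set \<delta> (sreg ?S ?z ?w (ps!Suc i))"
      using sib_path[OF cS qS qmin cd aff hmin refl pat(3) ne] by blast
    define C' where "C' = P @ [sgnpat ?z ?w q]"
    have qC: "q \<in> sreg ?S ?z ?w (sgnpat ?z ?w q)"
      unfolding sreg_def sgnpat_def using qS by auto
    have qCR: "q \<in> ?R C'" using qC sregR C'_def by simp
    have subC: "?R C' \<subseteq> ?S" unfolding C'_def by (rule region_snoc_sub)
    have dC': "dist_set \<delta> (?R C') = \<delta> q"
      using dist_set_eq[OF qCR] qmin subC by blast
    have dP: "dist_set \<delta> ?S = \<delta> q" using dist_set_eq[OF qS qmin] .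
    have vq: "valid ?w (sgnpat ?z ?w q)" unfolding valid_def sgnpat_def by auto
    have hvC': "hvertex L width W0 b0 W b C'" unfolding C'_def using hv[OF vq] qC by blast
    have hvP: "hvertex L width W0 b0 W b P" unfolding hvertex_def using patP neP by simp
    have te: "tree_edge L width W0 b0 W b \<delta> P C'"
      unfolding tree_edge_def
    proof (intro conjI allI impI)
      show "hvertex L width W0 b0 W b P" by fact
      show "hvertex L width W0 b0 W b C'" by fact
      show "2 \<le> length C'" using False unfolding C'_def by (cases P) auto
      show "butlast C' = P" unfolding C'_def by simp
    next
      fix C assume C: "hvertex L width W0 b0 W b C \<and> 2 \<le> length C \<and> butlast C = P"
      hence Cne: "C \<noteq> []" by auto
      hence "C = P @ [last C]" using C by (metis append_butlast_last_id)
      hence sub: "?R C \<subseteq> ?S" by (metis region_snoc_sub)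
      have neC: "?R C \<noteq> {}" using C unfolding hvertex_def by simp
      have "\<delta> q \<le> Inf (\<delta> ` ?R C)"
        using neC sub qmin by (intro cInf_greatest) auto
      thus "dist_set \<delta> (?R C') \<le> dist_set \<delta> (?R C)" using dC' unfolding dist_set_def by simp
    qed
    have junction: "?Rel (last p0) (hd (map (\<lambda>c'. P @ [c']) ps))"
    proof -
      have "hd (map (\<lambda>c'. P @ [c']) ps) = C'" using ps(1,2) C'_def by (simp add: hd_map)
      thus ?thesis using te p0(4) dC' dP unfolding hedge_def by simp
    qed
    show ?thesis
    proof (intro exI[of _ "p0 @ map (\<lambda>c'. P @ [c']) ps"] conjI)
      show "p0 @ map (\<lambda>c'. P @ [c']) ps \<noteq> []" using p0 by simp
      show "\<forall>B\<in>set (p0 @ map (\<lambda>c'. P @ [c']) ps). hvertex L width W0 b0 W b B"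
        using mapv[OF ps(4)] p0(2) by auto
      show "hd (p0 @ map (\<lambda>c'. P @ [c']) ps) = pattern1_of width W0 b0 W b x"
        using p0(1,3) by simp
      show "last (p0 @ map (\<lambda>c'. P @ [c']) ps) = P @ [c]" using ps(1,3) by (simp add: last_map)
      show "chain ?Rel (p0 @ map (\<lambda>c'. P @ [c']) ps)"
        using chain_append[OF p0(5) mapchain[OF ps(4,5)] p0(1) _ junction] ps(1) by simp
    qed
  qed
qed

end

theorem mainTheorem5:
  fixes L :: nat and width :: "nat \<Rightarrow> nat"
    and W0 :: "nat \<Rightarrow> real^'n" and b0 :: "nat \<Rightarrow> real"
    and W :: "nat \<Rightarrow> nat \<Rightarrow> nat \<Rightarrow> real" and b :: "nat \<Rightarrow> nat \<Rightarrow> real"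
    and x :: "real^'n" and \<delta> :: "real^'n \<Rightarrow> real"
    and A :: "(nat \<Rightarrow> int) list"
  assumes "1 \<le> L"
    and "convex_distance_function \<delta> x"
    and "is_pattern L width A"
    and "region width W0 b0 W b A \<noteq> {}"
  shows "\<exists>p. hpath L width W0 b0 W b \<delta> p \<and>
           hd p = pattern1_of width W0 b0 W b x \<and> last p = A \<and>
           (\<forall>i. Suc i < length p \<longrightarrow>
              dist_set \<delta> (region width W0 b0 W b (p ! i))
                \<le> dist_set \<delta> (region width W0 b0 W b (p ! Suc i)))"
proof -
  obtain p where p: "p \<noteq> []" "\<forall>B\<in>set p. hvertex L width W0 b0 W b B"
     "hd p = pattern1_of width W0 b0 W b x" "last p = A"
     "chain (\<lambda>B C. hedge L width W0 b0 W b \<delta> B C \<and>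
       dist_set \<delta> (region width W0 b0 W b B) \<le> dist_set \<delta> (region width W0 b0 W b C)) p"
    using main_ind[OF assms(2,3,4)] by blast
  show ?thesis
    using p unfolding hpath_def chain_def by blast
qed

end
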